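(* Let $(x_t)_{t\ge 0}$ be a Markov process on a state space $\mathcal{X}$, let $p$ be the marginal distribution of states (the same for every time index), and let $p_{t+}(\cdot \mid x_0) = (1-\gamma)\sum_{t=0}^\infty \gamma^t p_t(\cdot \mid x_0)$ be the $\gamma$-discounted state occupancy measure, where $p_t(\cdot\mid x_0)$ is the distribution of $x_t$ given $x_0$. Let $\psi:\mathcal{X}\to\mathbb{R}^k$ be an encoder, $A\in\mathbb{R}^{k\times k}$, and $c>0$. Assume: (i) if $x\sim p$, then $\psi(x)\sim\mathcal{N}(0, c\, I)$; (ii) there is a constant $C>0$ such that for all $x_0, x$, $e^{-\frac12\|A\psi(x_0)-\psi(x)\|_2^2} = \frac{p_{t+}(x_{t+}=x\mid x_0)}{p(x)\,C}.$ Let $x_0\sim p$, $x_{t+}\sim p_{t+}(\cdot\mid x_0)$, $\psi_0=\psi(x_0)$, $\psi_{t+}=\psi(x_{t+})$. Then the conditional distribution of $\psi_{t+}$ given $\psi_0$ is $p(\psi_{t+}=\psi\mid \psi_0) = \mathcal{N}\!\left(\psi;\ \mu=\tfrac{c}{c+1}A\psi_0,\ \Sigma=\tfrac{c}{c+1}I\right).$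
   Context: The encoder $\psi$ and matrix $A$ arise from temporal contrastive learning in which the encoder applied to the earlier state is $\phi(x)=A\psi(x)$; hypotheses (i) and (ii) are the paper's two modeling assumptions (Gaussian marginal of representations, and the learned critic encoding the probability ratio of the discounted occupancy to the marginal). Densities are with respect to a common base measure. *)

theory Defs
  imports "HOL-Probability.Probability"
begin

definition iso_gauss_density :: "real ^ 'k \<Rightarrow> real \<Rightarrow> real ^ 'k \<Rightarrow> real" where
  "iso_gauss_density m s v =
     (2 * pi * s) powr (- real CARD('k) / 2) * exp (- (norm (v - m))\<^sup>2 / (2 * s))"

end

theory Submission
  imports Defs
begin

lemma real_exp_id: "c > 0 \<Longrightarrow> - a / (2 * c) + (- (1/2) * (b - 2 * d + a))
       = - (a - 2 * (c / (c + 1)) * d + (c / (c + 1))^2 * b) / (2 * (c / (c + 1))) + (- b / (2 * (c + 1)))"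
    for a b d c :: real
proof -
  assume c: "c > 0"
  define s where "s = c / (c + 1)"
  have s: "s * (c + 1) = c" "s > 0" using c by (auto simp: s_def field_simps)
  have E1: "(- (a - 2 * s * d + s^2 * b)) / (2 * s) = - (a / (2 * s)) + d - s * b / 2"
    using s by (simp add: field_simps power2_eq_square)
  have E2: "a / (2 * s) = a / 2 + a / (2 * c)" using s c by (simp add: field_simps s_def)
  have E3: "s * b / 2 + b / (2 * (c + 1)) = b / 2"
  proof -
    have h: "s + 1 / (c + 1) = 1" using c by (simp add: s_def field_simps)
    have "s * b / 2 + b / (2 * (c + 1)) = b / 2 * (s + 1 / (c + 1))" by (simp add: algebra_simps)
    then show ?thesis using h by simp
  qed
  have E4: "(- b) / (2 * (c + 1)) = - (b / (2 * (c + 1)))" "(- a) / (2 * c) = - (a / (2 * c))" by simp_all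
  have "- a / (2 * c) + (- (1/2) * (b - 2 * d + a))
       = - (a - 2 * s * d + s^2 * b) / (2 * s) + (- b / (2 * (c + 1)))"
  proof -
    have L: "P = a / 2 + Q \<Longrightarrow> T / 2 + R = b / 2 \<Longrightarrow> - Q + - (1/2) * (b - 2 * d + a) = - P + d - T / 2 + - R"
      for P Q R T :: real by (simp add: field_simps)
    show ?thesis unfolding E1 E4 using L[OF E2 E3]
      by (simp add: algebra_simps)
  qed
  then show ?thesis unfolding s_def .
qed

lemma exponent_id:
  fixes v w :: "'a::real_inner" and c :: real
  assumes c: "c > 0"
  shows "- (norm v)\<^sup>2 / (2 * c) + (- (1/2) * (norm (w - v))\<^sup>2)
       = - (norm (v - (c / (c + 1)) *\<^sub>R w))\<^sup>2 / (2 * (c / (c + 1))) + (- (norm w)\<^sup>2 / (2 * (c + 1)))"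
proof -
  have e1: "(norm (w - v))\<^sup>2 = w \<bullet> w - 2 * (v \<bullet> w) + v \<bullet> v"
    by (simp add: power2_norm_eq_inner inner_diff_left inner_diff_right inner_commute)
  have e2: "(norm (v - (c / (c + 1)) *\<^sub>R w))\<^sup>2 = v \<bullet> v - 2 * (c / (c + 1)) * (v \<bullet> w) + (c / (c + 1))^2 * (w \<bullet> w)"
    unfolding power2_norm_eq_inner
    by (simp add: inner_diff_left inner_diff_right inner_commute power2_eq_square algebra_simps)
  show ?thesis unfolding e1 e2 using real_exp_id[OF c, where a="v \<bullet> v" and b="w \<bullet> w" and d="v \<bullet> w"]
    by (simp add: power2_norm_eq_inner)
qed

lemma gauss_factor:
  fixes u v :: "real ^ 'k" and A :: "real ^ 'k ^ 'k"
  assumes c: "c > 0"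
  shows "iso_gauss_density 0 c v * (C * exp (- (1/2) * (norm (A *v u - v))\<^sup>2))
    = (C * (c + 1) powr (- real CARD('k) / 2) * exp (- (norm (A *v u))\<^sup>2 / (2 * (c + 1))))
      * iso_gauss_density ((c / (c + 1)) *\<^sub>R (A *v u)) (c / (c + 1)) v"
proof -
  let ?k = "- real CARD('k) / 2"
  have pc: "(2 * pi * c) powr ?k = (c + 1) powr ?k * (2 * pi * (c / (c + 1))) powr ?k"
  proof -
    have "2 * pi * c = (c + 1) * (2 * pi * (c / (c + 1)))" using c by (simp add: field_simps)
    then have "(2 * pi * c) powr ?k = ((c + 1) * (2 * pi * (c / (c + 1)))) powr ?k" by simp
    also have "\<dots> = (c + 1) powr ?k * (2 * pi * (c / (c + 1))) powr ?k"
      by (rule powr_mult)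
    finally show ?thesis .
  qed
  have ex: "exp (- (norm v)\<^sup>2 / (2 * c)) * exp (- (1/2) * (norm (A *v u - v))\<^sup>2)
     = exp (- (norm (A *v u))\<^sup>2 / (2 * (c + 1))) * exp (- (norm (v - (c / (c + 1)) *\<^sub>R (A *v u)))\<^sup>2 / (2 * (c / (c + 1))))"
    using exponent_id[OF c, of v "A *v u"] by (simp add: exp_add[symmetric] add.commute)
  show ?thesis unfolding iso_gauss_density_def pc
    using ex by (simp add: algebra_simps)
qed

lemma iso_gauss_nonneg: "iso_gauss_density m s v \<ge> 0"
  unfolding iso_gauss_density_def by simp

lemma gauss_scale:
  fixes m x :: "real ^ 'k"
  assumes s: "s > 0" and c: "c > 0"
  shows "sqrt (s / c) ^ CARD('k) * iso_gauss_density m s (m + sqrt (s / c) *\<^sub>R x) = iso_gauss_density 0 c x"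
proof -
  let ?D = "real CARD('k)"
  have sc: "s / c > 0" using s c by simp
  have a: "sqrt (s / c) ^ CARD('k) = (s / c) powr (?D / 2)"
  proof -
    have "sqrt (s / c) = (s / c) powr (1/2)" using sc by (simp add: powr_half_sqrt)
    then have "sqrt (s / c) ^ CARD('k) = ((s / c) powr (1/2)) powr ?D"
      using sc by (subst powr_realpow) auto
    also have "\<dots> = (s / c) powr (?D / 2)" by (simp add: powr_powr)
    finally show ?thesis .
  qed
  have p: "(s / c) powr (?D / 2) * (2 * pi * s) powr (- ?D / 2) = (2 * pi * c) powr (- ?D / 2)"
  proof -
    have "2 * pi * s = (2 * pi * c) * (s / c)" using c by simp
    then have "(2 * pi * s) powr (- ?D / 2) = ((2 * pi * c) * (s / c)) powr (- ?D / 2)"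
      by (rule arg_cong[where f="\<lambda>z. z powr (- ?D / 2)"])
    also have "\<dots> = (2 * pi * c) powr (- ?D / 2) * (s / c) powr (- ?D / 2)"
      by (rule powr_mult)
    finally have "(2 * pi * s) powr (- ?D / 2) = (2 * pi * c) powr (- ?D / 2) * (s / c) powr (- ?D / 2)" .
    moreover have "(s / c) powr (?D / 2) * (s / c) powr (- ?D / 2) = 1"
      using s c by (simp add: powr_add[symmetric])
    ultimately show ?thesis by (simp add: algebra_simps)
  qed
  have e: "(norm (sqrt (s / c) *\<^sub>R x))\<^sup>2 / (2 * s) = (norm x)\<^sup>2 / (2 * c)"
    using s c by (simp add: power_mult_distrib field_simps)
  show ?thesis unfolding iso_gauss_density_def a
    using p e by (simp add: algebra_simps)
qed

lemma gauss_int: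
  fixes m :: "real ^ 'k"
  assumes s: "s > 0" and c: "c > 0"
  shows "(\<integral>\<^sup>+ v. ennreal (iso_gauss_density m s v) \<partial>lborel) = (\<integral>\<^sup>+ v. ennreal (iso_gauss_density (0::real^'k) c v) \<partial>lborel)"
proof -
  let ?a = "sqrt (s / c)"
  have a0: "?a \<noteq> 0" using s c by simp
  have [measurable]: "(\<lambda>v. ennreal (iso_gauss_density m s v)) \<in> borel_measurable borel"
    unfolding iso_gauss_density_def by measurable
  have pw: "ennreal (\<bar>?a\<bar> ^ CARD('k)) * ennreal (iso_gauss_density m s (m + ?a *\<^sub>R x))
        = ennreal (iso_gauss_density 0 c x)" for x :: "real ^ 'k"
  proof -
    have "ennreal (\<bar>?a\<bar> ^ CARD('k)) * ennreal (iso_gauss_density m s (m + ?a *\<^sub>R x))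
        = ennreal (?a ^ CARD('k) * iso_gauss_density m s (m + ?a *\<^sub>R x))"
      using s c by (simp add: ennreal_mult iso_gauss_nonneg)
    then show ?thesis using gauss_scale[OF s c, of m x] by simp
  qed
  have "(\<integral>\<^sup>+ v. ennreal (iso_gauss_density m s v) \<partial>lborel)
     = (\<integral>\<^sup>+ v. ennreal (iso_gauss_density m s v) \<partial>density (distr lborel borel (\<lambda>x. m + ?a *\<^sub>R x)) (\<lambda>_. \<bar>?a\<bar> ^ DIM(real ^ 'k)))"
    using lborel_affine[OF a0, of m] by simp
  also have "\<dots> = (\<integral>\<^sup>+ x. ennreal (\<bar>?a\<bar> ^ DIM(real ^ 'k)) * ennreal (iso_gauss_density m s (m + ?a *\<^sub>R x)) \<partial>lborel)"
    by (simp add: nn_integral_density nn_integral_distr)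
  also have "\<dots> = (\<integral>\<^sup>+ x. ennreal (iso_gauss_density (0::real^'k) c x) \<partial>lborel)"
    by (simp add: pw)
  finally show ?thesis .
qed
theorem lemma1:
  fixes \<mu> :: "'a measure"
    and p :: "'a \<Rightarrow> real"
    and q :: "'a \<Rightarrow> 'a \<Rightarrow> real"
    and \<psi> :: "'a \<Rightarrow> real ^ 'k"
    and A :: "real ^ 'k ^ 'k"
    and c C :: real
  assumes sf: "sigma_finite_measure \<mu>"
    and p_meas: "p \<in> borel_measurable \<mu>"
    and p_nonneg: "\<forall>x\<in>space \<mu>. 0 \<le> p x"
    and p_prob: "(\<integral>\<^sup>+ x. ennreal (p x) \<partial>\<mu>) = 1"
    and q_meas: "(\<lambda>(x0, x). q x0 x) \<in> borel_measurable (\<mu> \<Otimes>\<^sub>M \<mu>)"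
    and q_nonneg: "\<forall>x0\<in>space \<mu>. \<forall>x\<in>space \<mu>. 0 \<le> q x0 x"
    and q_prob: "\<forall>x0\<in>space \<mu>. (\<integral>\<^sup>+ x. ennreal (q x0 x) \<partial>\<mu>) = 1"
    and psi_meas: "\<psi> \<in> \<mu> \<rightarrow>\<^sub>M borel"
    and c_pos: "c > 0"
    and gauss_marg: "distr (density \<mu> (\<lambda>x. ennreal (p x))) lborel \<psi>
                       = density lborel (\<lambda>v. ennreal (iso_gauss_density 0 c v))"
    and C_pos: "C > 0"
    and critic: "\<forall>x0\<in>space \<mu>. \<forall>x\<in>space \<mu>.
                   exp (- (1/2) * (norm (A *v \<psi> x0 - \<psi> x))\<^sup>2) = q x0 x / (p x * C)"
  shows "distr (density (\<mu> \<Otimes>\<^sub>M \<mu>) (\<lambda>(x0, x). ennreal (p x0 * q x0 x)))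
               (lborel \<Otimes>\<^sub>M lborel) (\<lambda>(x0, x). (\<psi> x0, \<psi> x))
         = density (lborel \<Otimes>\<^sub>M lborel)
             (\<lambda>(u, v). ennreal (iso_gauss_density 0 c u *
                 iso_gauss_density ((c / (c + 1)) *\<^sub>R (A *v u)) (c / (c + 1)) v))"
proof -
  interpret sf: sigma_finite_measure \<mu> by (rule sf)
  define Mp where "Mp = density \<mu> (\<lambda>x. ennreal (p x))"
  define D where "D = distr Mp lborel \<psi>"
  define G where "G = (\<lambda>(u::real^'k) v. C * exp (- (1/2) * (norm (A *v u - v))\<^sup>2))"
  define Nc where "Nc = (\<lambda>v::real^'k. ennreal (iso_gauss_density 0 c v))"
  define F where "F = (\<lambda>u::real^'k. C * (c + 1) powr (- real CARD('k) / 2) * exp (- (norm (A *v u))\<^sup>2 / (2 * (c + 1))))"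
  have Av_meas[measurable]: "(\<lambda>u. A *v u) \<in> borel_measurable borel"
    by (intro borel_measurable_continuous_onI matrix_vector_mult_linear_continuous_on)
  have G_meas[measurable]: "(\<lambda>(u, v). G u v) \<in> borel_measurable (lborel \<Otimes>\<^sub>M lborel)"
    unfolding G_def by measurable
  have Nc_meas[measurable]: "Nc \<in> borel_measurable lborel"
    unfolding Nc_def iso_gauss_density_def by measurable
  have F_meas[measurable]: "F \<in> borel_measurable borel"
    unfolding F_def by measurable
  have G_nonneg: "G u v \<ge> 0" for u v using C_pos by (simp add: G_def)
  have p_pos: "p x > 0" if "x \<in> space \<mu>" for x
  proof -
    have "q x x / (p x * C) > 0" using critic that by (metis exp_gt_zero)
    then have "p x \<noteq> 0" by auto
    then show ?thesis using p_nonneg that by force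
  qed
  have q_eq: "q x0 x = p x * G (\<psi> x0) (\<psi> x)" if "x0 \<in> space \<mu>" "x \<in> space \<mu>" for x0 x
  proof -
    have e: "exp (- (1/2) * (norm (A *v \<psi> x0 - \<psi> x))\<^sup>2) = q x0 x / (p x * C)"
      using critic that by blast
    have "p x * C > 0" using p_pos[OF that(2)] C_pos by simp
    have "p x \<noteq> 0" "C \<noteq> 0" using p_pos[OF that(2)] C_pos by auto
    then have "q x0 x = (q x0 x / (p x * C)) * (p x * C)" by simp
    also have "\<dots> = exp (- (1/2) * (norm (A *v \<psi> x0 - \<psi> x))\<^sup>2) * (p x * C)" using e by simp
    finally show ?thesis unfolding G_def by (simp add: algebra_simps)
  qed
  have Mp_space: "emeasure Mp (space Mp) = 1"
  proof -
    have "emeasure Mp (space Mp) = (\<integral>\<^sup>+ x. ennreal (p x) * indicator (space \<mu>) x \<partial>\<mu>)"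
      unfolding Mp_def using p_meas by (simp add: emeasure_density)
    also have "\<dots> = (\<integral>\<^sup>+ x. ennreal (p x) \<partial>\<mu>)"
      by (rule nn_integral_cong) simp
    finally show ?thesis using p_prob by simp
  qed
  have Mp_fin: "finite_measure Mp" by (rule finite_measureI) (simp add: Mp_space)
  have Mp_sf: "sigma_finite_measure Mp"
    using Mp_fin by (simp add: finite_measure.axioms(1))
  have psi_Mp[measurable]: "\<psi> \<in> measurable Mp lborel"
    unfolding Mp_def using psi_meas by simp
  have psi_Mp2[measurable]: "\<psi> \<in> borel_measurable Mp"
    unfolding Mp_def using psi_meas by simp
  note psi_meas[measurable] p_meas[measurable]
  have D_eq: "D = density lborel Nc" unfolding D_def Mp_def Nc_def by (rule gauss_marg)
  have D_fin: "finite_measure D"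
    unfolding D_def by (rule finite_measure.finite_measure_distr[OF Mp_fin psi_Mp])
  have D_sf: "sigma_finite_measure D"
    using D_fin by (simp add: finite_measure.axioms(1))
  have Nc_int: "(\<integral>\<^sup>+ v. Nc v \<partial>lborel) = 1"
  proof -
    have "(\<integral>\<^sup>+ v. Nc v \<partial>lborel) = emeasure D (space D)"
      unfolding D_eq by (simp add: emeasure_density)
    also have "\<dots> = emeasure Mp (space Mp)"
      unfolding D_def by (subst emeasure_distr[OF psi_Mp]) (auto intro!: arg_cong[where f="emeasure Mp"])
    finally show ?thesis using Mp_space by simp
  qed
  have F_one: "F (\<psi> x0) = 1" if x0: "x0 \<in> space \<mu>" for x0
  proof -
    let ?u = "\<psi> x0"
    have "1 = (\<integral>\<^sup>+ x. ennreal (q x0 x) \<partial>\<mu>)" using q_prob x0 by simp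
    also have "\<dots> = (\<integral>\<^sup>+ x. ennreal (p x) * ennreal (G ?u (\<psi> x)) \<partial>\<mu>)"
      by (rule nn_integral_cong) (simp add: q_eq[OF x0] ennreal_mult p_nonneg G_nonneg)
    also have "\<dots> = (\<integral>\<^sup>+ x. ennreal (G ?u (\<psi> x)) \<partial>Mp)"
      unfolding Mp_def using p_meas psi_meas
      by (subst nn_integral_density) (auto simp: G_def)
    also have "\<dots> = (\<integral>\<^sup>+ v. ennreal (G ?u v) \<partial>D)"
      unfolding D_def by (subst nn_integral_distr) (auto simp: G_def)
    also have "\<dots> = (\<integral>\<^sup>+ v. Nc v * ennreal (G ?u v) \<partial>lborel)"
      unfolding D_eq by (subst nn_integral_density) (auto simp: G_def)
    also have "\<dots> = (\<integral>\<^sup>+ v. ennreal (F ?u) * ennreal (iso_gauss_density ((c / (c + 1)) *\<^sub>R (A *v ?u)) (c / (c + 1)) v) \<partial>lborel)"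
    proof (rule nn_integral_cong)
      fix v :: "real ^ 'k"
      have "Nc v * ennreal (G ?u v) = ennreal (iso_gauss_density 0 c v * G ?u v)"
        unfolding Nc_def by (simp add: ennreal_mult iso_gauss_nonneg G_nonneg)
      also have "\<dots> = ennreal (F ?u * iso_gauss_density ((c / (c + 1)) *\<^sub>R (A *v ?u)) (c / (c + 1)) v)"
        unfolding G_def F_def by (rule arg_cong[OF gauss_factor[OF c_pos]])
      also have "\<dots> = ennreal (F ?u) * ennreal (iso_gauss_density ((c / (c + 1)) *\<^sub>R (A *v ?u)) (c / (c + 1)) v)"
        using C_pos by (simp add: ennreal_mult iso_gauss_nonneg F_def)
      finally show "Nc v * ennreal (G ?u v) = ennreal (F ?u) * ennreal (iso_gauss_density ((c / (c + 1)) *\<^sub>R (A *v ?u)) (c / (c + 1)) v)" .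
    qed
    also have "\<dots> = ennreal (F ?u) * (\<integral>\<^sup>+ v. ennreal (iso_gauss_density ((c / (c + 1)) *\<^sub>R (A *v ?u)) (c / (c + 1)) v) \<partial>lborel)"
      by (rule nn_integral_cmult) (simp add: iso_gauss_density_def)
    also have "\<dots> = ennreal (F ?u)"
      using gauss_int[of "c / (c + 1)" c "(c / (c + 1)) *\<^sub>R (A *v ?u)"] c_pos Nc_int
      unfolding Nc_def by simp
    finally have "ennreal (F ?u) = 1" by simp
    moreover have "F ?u \<ge> 0" using C_pos by (simp add: F_def)
    ultimately show ?thesis by simp
  qed
  define S where "S = {u. F u \<noteq> 1}"
  have S_sets: "S \<in> sets borel" unfolding S_def by measurable
  have S_null_D: "S \<in> null_sets D"
  proof -
    have "emeasure D S = emeasure Mp (\<psi> -` S \<inter> space Mp)"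
      unfolding D_def using S_sets by (subst emeasure_distr[OF psi_Mp]) auto
    also have "\<psi> -` S \<inter> space Mp = {}"
      unfolding S_def Mp_def using F_one by auto
    finally have "emeasure D S = 0" by simp
    then show ?thesis using S_sets unfolding D_def by (auto simp: null_sets_def)
  qed
  have S_null: "S \<in> null_sets lborel"
  proof -
    have "AE u in lborel. u \<in> S \<longrightarrow> Nc u = 0"
      using S_null_D unfolding D_eq by (subst (asm) null_sets_density_iff) auto
    moreover have "Nc u \<noteq> 0" for u
      unfolding Nc_def iso_gauss_density_def using c_pos by simp
    ultimately have "AE u in lborel. u \<notin> S" by auto
    then show ?thesis using S_sets by (subst AE_iff_null_sets) auto
  qed
  have SU_null: "S \<times> UNIV \<in> null_sets (lborel \<Otimes>\<^sub>M (lborel :: (real ^ 'k) measure))"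
    by (rule lborel.times_in_null_sets1[OF S_null]) simp
  have AE_F: "AE z in lborel \<Otimes>\<^sub>M (lborel :: (real ^ 'k) measure). F (fst z) = 1"
    using AE_not_in[OF SU_null] by eventually_elim (auto simp: S_def)
  define PP where "PP = (\<lambda>(x::'a, y::'a). ennreal (p x) * ennreal (p y))"
  define H where "H = (\<lambda>(u::real^'k, v::real^'k). ennreal (G u v))"
  have NN_meas: "(\<lambda>(u, v). Nc u * Nc v) \<in> borel_measurable (lborel \<Otimes>\<^sub>M (lborel :: (real^'k) measure))"
    by measurable
  have PP_meas[measurable]: "PP \<in> borel_measurable (\<mu> \<Otimes>\<^sub>M \<mu>)" unfolding PP_def by measurable
  have H_meas[measurable]: "H \<in> borel_measurable (lborel \<Otimes>\<^sub>M lborel)"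
    unfolding H_def using G_meas by measurable
  have psi_lb: "\<psi> \<in> measurable \<mu> lborel" using psi_meas by simp
  have Psi_eq: "(\<lambda>(x0, x). (\<psi> x0, \<psi> x)) = (\<lambda>z. (\<psi> (fst z), \<psi> (snd z)))" by auto
  have Psi_meas[measurable]: "(\<lambda>(x0, x). (\<psi> x0, \<psi> x)) \<in> measurable (Mp \<Otimes>\<^sub>M Mp) (lborel \<Otimes>\<^sub>M lborel)"
    unfolding Psi_eq
    by (intro measurable_Pair measurable_compose[OF measurable_fst psi_Mp] measurable_compose[OF measurable_snd psi_Mp])
  have Psi_meas2[measurable]: "(\<lambda>(x0, x). (\<psi> x0, \<psi> x)) \<in> measurable (\<mu> \<Otimes>\<^sub>M \<mu>) (lborel \<Otimes>\<^sub>M lborel)"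
    unfolding Psi_eq
    by (intro measurable_Pair measurable_compose[OF measurable_fst psi_lb] measurable_compose[OF measurable_snd psi_lb])
  have HPsi2: "(\<lambda>z. H ((\<lambda>(x0, x). (\<psi> x0, \<psi> x)) z)) \<in> borel_measurable (\<mu> \<Otimes>\<^sub>M \<mu>)"
    by (rule measurable_compose[OF Psi_meas2 H_meas])
  have HPsi: "(\<lambda>z. H ((\<lambda>(x0, x). (\<psi> x0, \<psi> x)) z)) \<in> borel_measurable (Mp \<Otimes>\<^sub>M Mp)"
    by (rule measurable_compose[OF Psi_meas H_meas])
  have PPH: "(\<lambda>z. PP z * H ((\<lambda>(x0, x). (\<psi> x0, \<psi> x)) z)) \<in> borel_measurable (\<mu> \<Otimes>\<^sub>M \<mu>)"
    by (rule borel_measurable_times_ennreal[OF PP_meas HPsi2])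
  have pq_meas: "(\<lambda>(x0, x). ennreal (p x0 * q x0 x)) \<in> borel_measurable (\<mu> \<Otimes>\<^sub>M \<mu>)"
    using q_meas by measurable
  have "density (\<mu> \<Otimes>\<^sub>M \<mu>) (\<lambda>(x0, x). ennreal (p x0 * q x0 x))
      = density (\<mu> \<Otimes>\<^sub>M \<mu>) (\<lambda>z. PP z * H ((\<lambda>(x0, x). (\<psi> x0, \<psi> x)) z))"
  proof (rule density_cong)
    show "(\<lambda>(x0, x). ennreal (p x0 * q x0 x)) \<in> borel_measurable (\<mu> \<Otimes>\<^sub>M \<mu>)"
      by (rule pq_meas)
    show "(\<lambda>z. PP z * H ((\<lambda>(x0, x). (\<psi> x0, \<psi> x)) z)) \<in> borel_measurable (\<mu> \<Otimes>\<^sub>M \<mu>)"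
      by (rule PPH)
    show "AE z in \<mu> \<Otimes>\<^sub>M \<mu>. (\<lambda>(x0, x). ennreal (p x0 * q x0 x)) z = PP z * H ((\<lambda>(x0, x). (\<psi> x0, \<psi> x)) z)"
    proof (rule AE_I2)
      fix z assume "z \<in> space (\<mu> \<Otimes>\<^sub>M \<mu>)"
      then obtain x0 x where z: "z = (x0, x)" "x0 \<in> space \<mu>" "x \<in> space \<mu>"
        by (auto simp: space_pair_measure)
      show "(\<lambda>(x0, x). ennreal (p x0 * q x0 x)) z = PP z * H ((\<lambda>(x0, x). (\<psi> x0, \<psi> x)) z)"
        using z p_nonneg G_nonneg
        by (simp add: PP_def H_def q_eq ennreal_mult mult.assoc)
    qed
  qed
  also have "\<dots> = density (density (\<mu> \<Otimes>\<^sub>M \<mu>) PP) (\<lambda>z. H ((\<lambda>(x0, x). (\<psi> x0, \<psi> x)) z))"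
    by (rule density_density_eq[symmetric, OF PP_meas HPsi2])
  also have "density (\<mu> \<Otimes>\<^sub>M \<mu>) PP = Mp \<Otimes>\<^sub>M Mp"
    unfolding PP_def Mp_def
    by (rule pair_measure_density[symmetric, OF _ _ sf]) (use Mp_sf in \<open>simp_all add: Mp_def\<close>)
  finally have step1: "distr (density (\<mu> \<Otimes>\<^sub>M \<mu>) (\<lambda>(x0, x). ennreal (p x0 * q x0 x)))
               (lborel \<Otimes>\<^sub>M lborel) (\<lambda>(x0, x). (\<psi> x0, \<psi> x))
     = distr (density (Mp \<Otimes>\<^sub>M Mp) (\<lambda>z. H ((\<lambda>(x0, x). (\<psi> x0, \<psi> x)) z))) (lborel \<Otimes>\<^sub>M lborel) (\<lambda>(x0, x). (\<psi> x0, \<psi> x))"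
    by simp
  also have "\<dots> = density (distr (Mp \<Otimes>\<^sub>M Mp) (lborel \<Otimes>\<^sub>M lborel) (\<lambda>(x0, x). (\<psi> x0, \<psi> x))) H"
    by (rule density_distr[symmetric, OF H_meas Psi_meas])
  also have "distr (Mp \<Otimes>\<^sub>M Mp) (lborel \<Otimes>\<^sub>M lborel) (\<lambda>(x0, x). (\<psi> x0, \<psi> x)) = D \<Otimes>\<^sub>M D"
    unfolding D_def by (rule pair_measure_distr[symmetric, OF psi_Mp psi_Mp]) (use D_sf in \<open>simp add: D_def\<close>)
  also have "D \<Otimes>\<^sub>M D = density (lborel \<Otimes>\<^sub>M lborel) (\<lambda>(u, v). Nc u * Nc v)"
    unfolding D_eq
    by (rule pair_measure_density[OF Nc_meas Nc_meas lborel.sigma_finite_measure_axioms]) (use D_sf in \<open>simp add: D_eq\<close>)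
  also have "density (density (lborel \<Otimes>\<^sub>M lborel) (\<lambda>(u, v). Nc u * Nc v)) H
      = density (lborel \<Otimes>\<^sub>M lborel) (\<lambda>z. (\<lambda>(u, v). Nc u * Nc v) z * H z)"
    by (rule density_density_eq[OF NN_meas H_meas])
  also have "\<dots> = density (lborel \<Otimes>\<^sub>M lborel)
             (\<lambda>(u, v). ennreal (iso_gauss_density 0 c u *
                 iso_gauss_density ((c / (c + 1)) *\<^sub>R (A *v u)) (c / (c + 1)) v))"
  proof (rule density_cong)
    show "(\<lambda>z. (\<lambda>(u, v). Nc u * Nc v) z * H z) \<in> borel_measurable (lborel \<Otimes>\<^sub>M lborel)"
      by (rule borel_measurable_times_ennreal[OF NN_meas H_meas])
    show "(\<lambda>(u, v). ennreal (iso_gauss_density 0 c u *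
                 iso_gauss_density ((c / (c + 1)) *\<^sub>R (A *v u)) (c / (c + 1)) v)) \<in> borel_measurable (lborel \<Otimes>\<^sub>M lborel)"
      unfolding iso_gauss_density_def by measurable
    show "AE z in lborel \<Otimes>\<^sub>M lborel. (\<lambda>(u, v). Nc u * Nc v) z * H z = (\<lambda>(u, v). ennreal (iso_gauss_density 0 c u *
                 iso_gauss_density ((c / (c + 1)) *\<^sub>R (A *v u)) (c / (c + 1)) v)) z"
      using AE_F
    proof eventually_elim
      case (elim z)
      obtain u v where z: "z = (u, v)" by (cases z)
      have F1: "F u = 1" using elim z by simp
      have gf: "iso_gauss_density 0 c v * G u v = F u * iso_gauss_density ((c / (c + 1)) *\<^sub>R (A *v u)) (c / (c + 1)) v"
        unfolding G_def F_def by (rule gauss_factor[OF c_pos])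
      have "Nc u * Nc v * H (u, v) = ennreal (iso_gauss_density 0 c u * (iso_gauss_density 0 c v * G u v))"
        unfolding Nc_def H_def by (simp add: ennreal_mult iso_gauss_nonneg G_nonneg mult.assoc)
      also have "\<dots> = ennreal (iso_gauss_density 0 c u * iso_gauss_density ((c / (c + 1)) *\<^sub>R (A *v u)) (c / (c + 1)) v)"
        unfolding gf F1 by simp
      finally show ?case unfolding z by simp
    qed
  qed
  finally show ?thesis .
qed

end
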